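(* Let $\mathbf G=(\mathcal X,\mathcal E)$ be a directed graph with $\mathcal X=\{1,\dots,n\}$, with edge lengths $l_{ij}\ge0$ for $ij\in\mathcal E$ and $l_{ij}=+\infty$ for $ij\notin\mathcal E$. Fix $N\ge1$ and nodes $x_0,x_N$, and let $\mathcal X^{N+1}(x_0,x_N)$ denote the set of feasible paths $y=(y_0,\dots,y_N)$ with $y_0=x_0$, $y_N=x_N$, assumed nonempty. For $T>0$ let $P_T^*(x)=Z(T)^{-1}\exp(-l(x)/T)$, $Z(T)=\sum_{x}\exp(-l(x)/T)$, be the Boltzmann distribution on $\mathcal X^{N+1}$, where $l(x)=\sum_{t=0}^{N-1}l_{x_tx_{t+1}}$, and let $\mathfrak M^*_T$ be the minimizer of $\mathbb D(P\|P_T^* )$ over probability measures $P$ on $\mathcal X^{N+1}$ with initial marginal $\delta_{x_0}$ and final marginal $\delta_{x_N}$. Let $l_m(x_0,x_N)=\min_{y\in\mathcal X^{N+1}(x_0,x_N)}l(y)$. Then: (i) as $T\searrow0$, $\mathfrak M^*_T$ concentrates on the minimum length paths in $\mathcal X^{N+1}(x_0,x_N)$: if $y\in\mathcal X^{N+1}(x_0,x_N)$ has $l(y)>l_m(x_0,x_N)$, then $\mathfrak M^*_T(y)\to0$ as $T\searrow0$; (ii) as $T\nearrow+\infty$, $\mathfrak M^*_T$ tends to the uniform distribution on $\mathcal X^{N+1}(x_0,x_N)$; (iii) if $\mathcal X^{N+1}(x_0,x_N)$ is not a singleton and $l$ is not constant on it, then for each $\bar L$ with $l_m(x_0,x_N)\le\bar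 L\le\frac{1}{|\mathcal X^{N+1}(x_0,x_N)|}\sum_{y\in\mathcal X^{N+1}(x_0,x_N)}l(y)$ there is a unique $T\in[0,+\infty]$ such that $L(\mathfrak M^*_T)=\bar L$, and this $\mathfrak M^*_T$ solves the problem of maximizing the entropy $S(P)$ over probability measures $P$ on $\mathcal X^{N+1}$ with initial marginal $\delta_{x_0}$, final marginal $\delta_{x_N}$ and $L(P)=\bar L$.
   Context: A path $x=(x_0,\dots,x_N)$ is feasible if $x_tx_{t+1}\in\mathcal E$ for all $t$. $\delta_{x'}$ denotes the point mass at node $x'$. Relative entropy $\mathbb D(P\|Q)=\sum_xP(x)\log\frac{P(x)}{Q(x)}$ (with $+\infty$ if $\mathrm{Supp}P\not\subseteq\mathrm{Supp}Q$, and $0\log0=0$). Average path length of $P$: $L(P)=\sum_x l(x)P(x)$ with $(+\infty)\cdot0=0$. Entropy: $S(P)=-\sum_xP(x)\ln P(x)$. In (iii), $\mathfrak M^*_0$ and $\mathfrak M^*_{+\infty}$ are understood as the limits of $\mathfrak M^*_T$ as $T\searrow0$ and $T\nearrow+\infty$ respectively. *)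

theory Defs
  imports "HOL-Analysis.Analysis"
begin

text \<open>Nodes are elements of a finite type 'a (standing for {1..n}); a path of
  N+1 nodes is a list of length N+1; index t of the list is x_t.\<close>

definition paths :: "nat \<Rightarrow> 'a list set" where
  "paths N = {xs. length xs = Suc N}"

definition feasible :: "('a \<times> 'a) set \<Rightarrow> nat \<Rightarrow> 'a list \<Rightarrow> bool" where
  "feasible E N xs \<longleftrightarrow> length xs = Suc N \<and> (\<forall>t<N. (xs ! t, xs ! Suc t) \<in> E)"

definition rlen :: "('a \<Rightarrow> 'a \<Rightarrow> real) \<Rightarrow> nat \<Rightarrow> 'a list \<Rightarrow> real" where
  "rlen l N xs = (\<Sum>t<N. l (xs ! t) (xs ! Suc t))"

definition plen :: "('a \<times> 'a) set \<Rightarrow> ('a \<Rightarrow> 'a \<Rightarrow> real) \<Rightarrow> nat \<Rightarrow> 'a list \<Rightarrow> ereal" where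
  "plen E l N xs = (if feasible E N xs then ereal (rlen l N xs) else \<infinity>)"

definition fpaths :: "('a \<times> 'a) set \<Rightarrow> nat \<Rightarrow> 'a \<Rightarrow> 'a \<Rightarrow> 'a list set" where
  "fpaths E N x0 xN = {xs. feasible E N xs \<and> xs ! 0 = x0 \<and> xs ! N = xN}"

text \<open>Partition function and Boltzmann distribution (exp(-\<infinity>) = 0).\<close>
definition Zfun :: "('a \<times> 'a) set \<Rightarrow> ('a \<Rightarrow> 'a \<Rightarrow> real) \<Rightarrow> nat \<Rightarrow> real \<Rightarrow> real" where
  "Zfun E l N T = (\<Sum>x\<in>{xs. feasible E N xs}. exp (- rlen l N x / T))"

definition boltz :: "('a \<times> 'a) set \<Rightarrow> ('a \<Rightarrow> 'a \<Rightarrow> real) \<Rightarrow> nat \<Rightarrow> real \<Rightarrow> 'a list \<Rightarrow> real" where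
  "boltz E l N T x = (if feasible E N x then exp (- rlen l N x / T) / Zfun E l N T else 0)"

definition is_prob :: "nat \<Rightarrow> ('a list \<Rightarrow> real) \<Rightarrow> bool" where
  "is_prob N P \<longleftrightarrow> (\<forall>x. 0 \<le> P x) \<and> (\<forall>x. x \<notin> paths N \<longrightarrow> P x = 0)
      \<and> (\<Sum>x\<in>paths N. P x) = 1"

definition marg :: "nat \<Rightarrow> ('a list \<Rightarrow> real) \<Rightarrow> nat \<Rightarrow> 'a \<Rightarrow> real" where
  "marg N P t a = (\<Sum>x\<in>paths N. if x ! t = a then P x else 0)"

definition delta :: "'a \<Rightarrow> 'a \<Rightarrow> real" where
  "delta a b = (if b = a then 1 else 0)"

definition bridge :: "nat \<Rightarrow> 'a \<Rightarrow> 'a \<Rightarrow> ('a list \<Rightarrow> real) set" where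
  "bridge N x0 xN = {P. is_prob N P \<and> (\<forall>a. marg N P 0 a = delta x0 a)
      \<and> (\<forall>a. marg N P N a = delta xN a)}"

definition relent :: "nat \<Rightarrow> ('a list \<Rightarrow> real) \<Rightarrow> ('a list \<Rightarrow> real) \<Rightarrow> ereal" where
  "relent N P Q = (if (\<forall>x\<in>paths N. P x \<noteq> 0 \<longrightarrow> Q x \<noteq> 0)
      then ereal (\<Sum>x\<in>paths N. if P x = 0 then 0 else P x * ln (P x / Q x))
      else \<infinity>)"

text \<open>Average path length, with (+\<infinity>)*0 = 0 (this holds for ereal multiplication).\<close>
definition avglen :: "('a \<times> 'a) set \<Rightarrow> ('a \<Rightarrow> 'a \<Rightarrow> real) \<Rightarrow> nat \<Rightarrow> ('a list \<Rightarrow> real) \<Rightarrow> ereal" where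
  "avglen E l N P = (\<Sum>x\<in>paths N. plen E l N x * ereal (P x))"

definition entropy :: "nat \<Rightarrow> ('a list \<Rightarrow> real) \<Rightarrow> real" where
  "entropy N P = - (\<Sum>x\<in>paths N. if P x = 0 then 0 else P x * ln (P x))"

definition Mext :: "(real \<Rightarrow> 'a list \<Rightarrow> real) \<Rightarrow> ereal \<Rightarrow> 'a list \<Rightarrow> real" where
  "Mext M T y = (if T = 0 then Lim (at_right 0) (\<lambda>s. M s y)
      else if T = \<infinity> then Lim at_top (\<lambda>s. M s y)
      else M (real_of_ereal T) y)"

end

theory Submission
  imports Defs
begin


lemma hh_ge:
  fixes p q :: real
  assumes "0 \<le> p" "0 < q"
  shows "(if p = 0 then 0 else p * ln (p / q)) \<ge> p - q"
    and "(if p = 0 then 0 else p * ln (p / q)) = p - q \<Longrightarrow> p = q"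
proof -
  have A: "p * ln (p / q) \<ge> p - q \<and> (p * ln (p / q) = p - q \<longrightarrow> p = q)" if "p > 0"
  proof -
    have qp: "q / p > 0" using that assms by simp
    have l: "ln (q / p) \<le> q / p - 1" using ln_le_minus_one[OF qp] .
    have e: "ln (p / q) = - ln (q / p)" using that assms by (simp add: ln_div)
    have "p * ln (q / p) \<le> p * (q / p - 1)" using l that by (simp add: mult_left_mono)
    also have "\<dots> = q - p" using that by (simp add: field_simps)
    finally have 1: "p * ln (p / q) \<ge> p - q" using e by simp
    have 2: "p = q" if eq: "p * ln (p / q) = p - q"
    proof -
      have "p * ln (q / p) = q - p" using eq e by simp
      also have "\<dots> = p * (q / p - 1)" using \<open>p>0\<close> by (simp add: field_simps)
      finally have "p * ln (q / p) = p * (q / p - 1)" .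
      then have "ln (q / p) = q / p - 1" using \<open>p>0\<close> by simp
      then have "q / p = 1" using ln_eq_minus_one[OF qp] by simp
      then show ?thesis using \<open>p>0\<close> by simp
    qed
    show ?thesis using 1 2 by blast
  qed
  show "(if p = 0 then 0 else p * ln (p / q)) \<ge> p - q"
    using A assms by (cases "p = 0") auto
  show "p = q" if "(if p = 0 then 0 else p * ln (p / q)) = p - q"
    using A assms that by (cases "p = 0") auto
qed

lemma gibbs:
  fixes p q :: "'b \<Rightarrow> real"
  assumes fin: "finite S" and p: "\<And>x. x \<in> S \<Longrightarrow> 0 \<le> p x" and q: "\<And>x. x \<in> S \<Longrightarrow> 0 < q x"
    and s: "sum p S = sum q S"
  shows "(\<Sum>x\<in>S. if p x = 0 then 0 else p x * ln (p x / q x)) \<ge> 0"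
    and "(\<Sum>x\<in>S. if p x = 0 then 0 else p x * ln (p x / q x)) \<le> 0 \<Longrightarrow> \<forall>x\<in>S. p x = q x"
proof -
  let ?h = "\<lambda>x. (if p x = 0 then 0 else p x * ln (p x / q x))"
  have ge: "?h x - (p x - q x) \<ge> 0" if "x \<in> S" for x
    using hh_ge(1)[OF p[OF that] q[OF that]] by linarith
  have "(\<Sum>x\<in>S. ?h x) = (\<Sum>x\<in>S. ?h x - (p x - q x))"
    using s by (simp add: sum_subtractf)
  moreover have "(\<Sum>x\<in>S. ?h x - (p x - q x)) \<ge> 0" using ge by (simp add: sum_nonneg)
  ultimately show "(\<Sum>x\<in>S. ?h x) \<ge> 0" by simp
  assume "(\<Sum>x\<in>S. ?h x) \<le> 0"
  then have z: "(\<Sum>x\<in>S. ?h x - (p x - q x)) = 0"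
    using \<open>(\<Sum>x\<in>S. ?h x) = _\<close> \<open>(\<Sum>x\<in>S. ?h x - (p x - q x)) \<ge> 0\<close> by linarith
  have "\<forall>x\<in>S. ?h x - (p x - q x) = 0"
    using iffD1[OF sum_nonneg_eq_0_iff[OF fin] z] ge by blast
  then show "\<forall>x\<in>S. p x = q x"
  proof (intro ballI)
    fix x assume "\<forall>x\<in>S. ?h x - (p x - q x) = 0" "x \<in> S"
    then have "?h x = p x - q x" by simp
    then show "p x = q x" using hh_ge(2)[OF p[OF \<open>x\<in>S\<close>] q[OF \<open>x\<in>S\<close>]] by blast
  qed
qed

lemma exp_lim_top:
  fixes c :: real assumes "0 \<le> c"
  shows "((\<lambda>b. exp (- b * c)) \<longlongrightarrow> (if c = 0 then 1 else 0)) at_top"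
proof (cases "c = 0")
  case True then show ?thesis by simp
next
  case False then have "c > 0" using assms by simp
  have "filterlim (\<lambda>b. - b * c) at_bot at_top"
  proof -
    have "filterlim (\<lambda>b. (- c) * b) at_bot at_top"
      by (rule filterlim_tendsto_neg_mult_at_bot[OF tendsto_const]) (use \<open>c>0\<close> in \<open>auto intro: filterlim_ident\<close>)
    then show ?thesis by (simp add: mult.commute)
  qed
  then have "((\<lambda>b. exp (- b * c)) \<longlongrightarrow> 0) at_top"
    using exp_at_bot filterlim_compose by blast
  then show ?thesis using False by simp
qed



locale T4 =
  fixes E :: "('a::finite \<times> 'a) set" and l :: "'a \<Rightarrow> 'a \<Rightarrow> real"
    and N :: nat and x0 xN :: 'a and M :: "real \<Rightarrow> 'a list \<Rightarrow> real"
  assumes lnonneg: "\<And>i j. (i, j) \<in> E \<Longrightarrow> 0 \<le> l i j"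
    and N1: "1 \<le> N"
    and nonempty: "fpaths E N x0 xN \<noteq> {}"
    and Mmin: "\<And>T. T > 0 \<Longrightarrow> M T \<in> bridge N x0 xN \<and>
        (\<forall>P\<in>bridge N x0 xN. relent N (M T) (boltz E l N T) \<le> relent N P (boltz E l N T))"
begin

abbreviation "F \<equiv> fpaths E N x0 xN"
abbreviation "lf \<equiv> rlen l N"
definition "Zb b = (\<Sum>z\<in>F. exp (- b * lf z))"
definition "Gb b y = (if y \<in> F then exp (- b * lf y) / Zb b else 0)"

lemma fin_paths: "finite (paths N :: 'a list set)"
  using finite_lists_length_eq[of "UNIV :: 'a set" "Suc N"] by (simp add: paths_def)

lemma F_sub: "F \<subseteq> paths N"
  by (auto simp: fpaths_def feasible_def paths_def)

lemma finF: "finite F" using finite_subset[OF F_sub fin_paths] .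

lemma feas_fin: "finite {xs. feasible E N xs}"
  by (rule finite_subset[OF _ fin_paths]) (auto simp: feasible_def paths_def)

lemma lf_nonneg: "feasible E N x \<Longrightarrow> 0 \<le> lf x"
  unfolding rlen_def feasible_def by (auto intro!: sum_nonneg lnonneg)

lemma Zb_pos: "Zb b > 0"
  unfolding Zb_def using finF nonempty by (intro sum_pos) auto

lemma Gb_nonneg: "0 \<le> Gb b y"
  using Zb_pos[of b] by (simp add: Gb_def)

lemma Gb_pos: "y \<in> F \<Longrightarrow> 0 < Gb b y"
  using Zb_pos[of b] by (simp add: Gb_def)

lemma Gb_sum: "(\<Sum>y\<in>F. Gb b y) = 1"
proof -
  have "(\<Sum>y\<in>F. Gb b y) = (\<Sum>y\<in>F. exp (- b * lf y)) / Zb b"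
    by (simp add: Gb_def sum_divide_distrib)
  then show ?thesis using Zb_pos[of b] by (simp add: Zb_def)
qed

lemma in_bridge:
  assumes "\<And>x. 0 \<le> P x" "\<And>x. x \<notin> F \<Longrightarrow> P x = 0" "(\<Sum>x\<in>F. P x) = 1"
  shows "P \<in> bridge N x0 xN"
proof -
  have sF: "(\<Sum>x\<in>paths N. g x) = (\<Sum>x\<in>F. g x)" if "\<And>x. x \<notin> F \<Longrightarrow> g x = 0" for g :: "'a list \<Rightarrow> real"
    by (rule sum.mono_neutral_right[OF fin_paths F_sub]) (use that in auto)
  have ip: "is_prob N P"
    unfolding is_prob_def using assms F_sub sF[of P] by auto
  have m0: "marg N P 0 a = delta x0 a" for a
  proof -
    have "marg N P 0 a = (\<Sum>x\<in>F. if x ! 0 = a then P x else 0)"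
      unfolding marg_def by (rule sF) (use assms in auto)
    also have "\<dots> = (\<Sum>x\<in>F. if x0 = a then P x else 0)"
      by (rule sum.cong) (auto simp: fpaths_def)
    finally show ?thesis using assms(3) by (auto simp: delta_def)
  qed
  have mN: "marg N P N a = delta xN a" for a
  proof -
    have "marg N P N a = (\<Sum>x\<in>F. if x ! N = a then P x else 0)"
      unfolding marg_def by (rule sF) (use assms in auto)
    also have "\<dots> = (\<Sum>x\<in>F. if xN = a then P x else 0)"
      by (rule sum.cong) (auto simp: fpaths_def)
    finally show ?thesis using assms(3) by (auto simp: delta_def)
  qed
  show ?thesis unfolding bridge_def using ip m0 mN by auto
qed

lemma Gb_bridge: "Gb b \<in> bridge N x0 xN"
  by (rule in_bridge[OF Gb_nonneg _ Gb_sum]) (simp add: Gb_def)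

lemma bridge_support:
  assumes P: "P \<in> bridge N x0 xN" and nz: "P x \<noteq> 0"
  shows "x \<in> paths N" "x ! 0 = x0" "x ! N = xN"
proof -
  have ip: "is_prob N P" and m0: "\<And>a. marg N P 0 a = delta x0 a" and mN: "\<And>a. marg N P N a = delta xN a"
    using P by (auto simp: bridge_def)
  show xp: "x \<in> paths N" using ip nz unfolding is_prob_def by auto
  have pos: "\<And>z. 0 \<le> P z" using ip unfolding is_prob_def by auto
  show "x ! 0 = x0"
  proof (rule ccontr)
    assume ne: "x ! 0 \<noteq> x0"
    have "(\<Sum>z\<in>paths N. if z ! 0 = x ! 0 then P z else 0) = 0"
      using m0[of "x ! 0"] ne unfolding marg_def delta_def by auto
    then have "\<forall>z\<in>paths N. (if z ! 0 = x ! 0 then P z else 0) = 0"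
      by (subst sum_nonneg_eq_0_iff[OF fin_paths, symmetric]) (auto simp: pos)
    then show False using xp nz by auto
  qed
  show "x ! N = xN"
  proof (rule ccontr)
    assume ne: "x ! N \<noteq> xN"
    have "(\<Sum>z\<in>paths N. if z ! N = x ! N then P z else 0) = 0"
      using mN[of "x ! N"] ne unfolding marg_def delta_def by auto
    then have "\<forall>z\<in>paths N. (if z ! N = x ! N then P z else 0) = 0"
      by (subst sum_nonneg_eq_0_iff[OF fin_paths, symmetric]) (auto simp: pos)
    then show False using xp nz by auto
  qed
qed


lemma bridge_sumF:
  assumes "R \<in> bridge N x0 xN" "\<And>x. R x \<noteq> 0 \<Longrightarrow> x \<in> F"
  shows "(\<Sum>x\<in>F. R x) = 1" "\<And>x. 0 \<le> R x"
proof -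
  have ip: "is_prob N R" using assms(1) by (simp add: bridge_def)
  have "(\<Sum>x\<in>paths N. R x) = (\<Sum>x\<in>F. R x)"
    by (rule sum.mono_neutral_right[OF fin_paths F_sub]) (use assms(2) in auto)
  then show "(\<Sum>x\<in>F. R x) = 1" using ip by (simp add: is_prob_def)
  show "\<And>x. 0 \<le> R x" using ip by (simp add: is_prob_def)
qed

lemma relent_formula:
  assumes T: "T > 0" and R: "R \<in> bridge N x0 xN" and sup: "\<And>x. R x \<noteq> 0 \<Longrightarrow> x \<in> F"
  shows "relent N R (boltz E l N T) =
    ereal ((\<Sum>x\<in>F. if R x = 0 then 0 else R x * ln (R x / Gb (1/T) x))
       + ln (Zfun E l N T / Zb (1/T)))"
proof -
  let ?B = "boltz E l N T" and ?Q = "Gb (1/T)" and ?K = "ln (Zfun E l N T / Zb (1/T))"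
  obtain y where y: "y \<in> F" using nonempty by auto
  have Zf: "Zfun E l N T > 0"
    unfolding Zfun_def using y by (intro sum_pos[OF feas_fin]) (auto simp: fpaths_def)
  have Zb: "Zb (1/T) > 0" by (rule Zb_pos)
  have RF: "(\<Sum>x\<in>F. R x) = 1" and Rn: "\<And>x. 0 \<le> R x" using bridge_sumF[OF R sup] by auto
  have Bx: "?B x = exp (- (1/T) * lf x) / Zfun E l N T" if "x \<in> F" for x
    using that by (simp add: boltz_def fpaths_def)
  have Qx: "?Q x = exp (- (1/T) * lf x) / Zb (1/T)" if "x \<in> F" for x
    using that by (simp add: Gb_def)
  have supp: "\<forall>x\<in>paths N. R x \<noteq> 0 \<longrightarrow> ?B x \<noteq> 0"
    using sup Bx Zf by auto
  have "(\<Sum>x\<in>paths N. if R x = 0 then 0 else R x * ln (R x / ?B x))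
      = (\<Sum>x\<in>F. if R x = 0 then 0 else R x * ln (R x / ?B x))"
    by (rule sum.mono_neutral_right[OF fin_paths F_sub]) (use sup in auto)
  also have "\<dots> = (\<Sum>x\<in>F. (if R x = 0 then 0 else R x * ln (R x / ?Q x)) + R x * ?K)"
  proof (rule sum.cong[OF refl])
    fix x assume x: "x \<in> F"
    show "(if R x = 0 then 0 else R x * ln (R x / ?B x)) = (if R x = 0 then 0 else R x * ln (R x / ?Q x)) + R x * ?K"
    proof (cases "R x = 0")
      case False
      then have Rp: "R x > 0" using Rn[of x] by simp
      have "R x / ?B x = (R x / ?Q x) * (Zfun E l N T / Zb (1/T))"
        unfolding Bx[OF x] Qx[OF x] using Zf Zb by (simp add: field_simps)
      moreover have "R x / ?Q x > 0" using Rp Gb_pos[OF x] by simp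
      moreover have "Zfun E l N T / Zb (1/T) > 0" using Zf Zb by simp
      ultimately have "ln (R x / ?B x) = ln (R x / ?Q x) + ?K"
        by (simp only: ln_mult_pos)
      then show ?thesis using False by (simp add: distrib_left)
    qed simp
  qed
  also have "\<dots> = (\<Sum>x\<in>F. if R x = 0 then 0 else R x * ln (R x / ?Q x)) + ?K"
    using RF by (simp add: sum.distrib sum_distrib_right[symmetric])
  finally show ?thesis unfolding relent_def using supp by simp
qed

lemma M_eq:
  assumes T: "T > 0"
  shows "M T = Gb (1/T)"
proof -
  let ?B = "boltz E l N T" and ?Q = "Gb (1/T)" and ?K = "ln (Zfun E l N T / Zb (1/T))"
  have MB: "M T \<in> bridge N x0 xN" and le: "relent N (M T) ?B \<le> relent N ?Q ?B"
    using Mmin[OF T] Gb_bridge by auto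
  have Qsup: "\<And>x. ?Q x \<noteq> 0 \<Longrightarrow> x \<in> F" by (auto simp: Gb_def split: if_splits)
  have "(\<Sum>x\<in>F. if ?Q x = 0 then 0 else ?Q x * ln (?Q x / ?Q x)) = 0"
    by (rule sum.neutral) auto
  then have RQ: "relent N ?Q ?B = ereal ?K"
    using relent_formula[OF T Gb_bridge Qsup] by simp
  have supM: "M T x \<noteq> 0 \<Longrightarrow> x \<in> F" for x
  proof -
    assume nz: "M T x \<noteq> 0"
    have "relent N (M T) ?B \<noteq> \<infinity>" using le RQ by auto
    then have c: "\<forall>x\<in>paths N. M T x \<noteq> 0 \<longrightarrow> ?B x \<noteq> 0"
      unfolding relent_def by (auto split: if_splits)
    have "x \<in> paths N" "x ! 0 = x0" "x ! N = xN" using bridge_support[OF MB nz] by auto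
    with c nz have "?B x \<noteq> 0" by auto
    then have "feasible E N x" by (auto simp: boltz_def split: if_splits)
    then show "x \<in> F" using \<open>x ! 0 = x0\<close> \<open>x ! N = xN\<close> by (simp add: fpaths_def)
  qed
  have "ereal ((\<Sum>x\<in>F. if M T x = 0 then 0 else M T x * ln (M T x / ?Q x)) + ?K) \<le> ereal ?K"
    using le RQ relent_formula[OF T MB supM] by simp
  then have D: "(\<Sum>x\<in>F. if M T x = 0 then 0 else M T x * ln (M T x / ?Q x)) \<le> 0" by simp
  have MF: "(\<Sum>x\<in>F. M T x) = 1" and Mn: "\<And>x. 0 \<le> M T x" using bridge_sumF[OF MB supM] by auto
  have "\<forall>x\<in>F. M T x = ?Q x"
    by (rule gibbs(2)[OF finF _ _ _ D]) (auto simp: Mn Gb_pos MF Gb_sum)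
  then show ?thesis using supM Qsup by (intro ext) (metis)
qed


definition "mm = Min (lf ` F)"
definition "Fmin = {y\<in>F. lf y = mm}"
definition "Q0 y = (if y \<in> Fmin then 1 / real (card Fmin) else 0)"

lemma mm_le: "y \<in> F \<Longrightarrow> mm \<le> lf y"
  unfolding mm_def using finF by auto

lemma mm_att: "\<exists>y\<in>F. lf y = mm"
proof -
  have "mm \<in> lf ` F" unfolding mm_def using finF nonempty by (intro Min_in) auto
  then show ?thesis by auto
qed

lemma finFmin: "finite Fmin" using finF by (simp add: Fmin_def)
lemma Fmin_sub: "Fmin \<subseteq> F" by (auto simp: Fmin_def)
lemma card_Fmin: "card Fmin > 0"
  using mm_att finFmin by (auto simp: Fmin_def card_gt_0_iff)

lemma Gb_shift: "Gb b y = (if y \<in> F then exp (- b * (lf y - mm)) / (\<Sum>z\<in>F. exp (- b * (lf z - mm))) else 0)"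
proof (cases "y \<in> F")
  case True
  have e: "exp (- b * lf z) = exp (- b * (lf z - mm)) * exp (- b * mm)" for z
    by (simp add: exp_add[symmetric] algebra_simps)
  have Z: "Zb b = (\<Sum>z\<in>F. exp (- b * (lf z - mm))) * exp (- b * mm)"
    unfolding Zb_def e by (simp add: sum_distrib_right)
  have "Gb b y = exp (- b * (lf y - mm)) * exp (- b * mm) / ((\<Sum>z\<in>F. exp (- b * (lf z - mm))) * exp (- b * mm))"
    by (simp only: Gb_def if_True True e[of y] Z)
  then show ?thesis using True by simp
qed (simp add: Gb_def)

lemma Gb_top: "((\<lambda>b. Gb b y) \<longlongrightarrow> Q0 y) at_top"
proof (cases "y \<in> F")
  case True
  have lim: "((\<lambda>b. exp (- b * (lf z - mm))) \<longlongrightarrow> (if lf z = mm then 1 else 0)) at_top" if "z \<in> F" for z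
    using exp_lim_top[of "lf z - mm"] mm_le[OF that] by simp
  have den: "((\<lambda>b. \<Sum>z\<in>F. exp (- b * (lf z - mm))) \<longlongrightarrow> (\<Sum>z\<in>F. if lf z = mm then 1 else 0)) at_top"
    by (rule tendsto_sum) (rule lim)
  have cs: "(\<Sum>z\<in>F. if lf z = mm then 1 else 0) = real (card Fmin)"
    unfolding Fmin_def using finF by (simp add: sum.If_cases Int_def conj_commute)
  have "((\<lambda>b. exp (- b * (lf y - mm)) / (\<Sum>z\<in>F. exp (- b * (lf z - mm)))) \<longlongrightarrow>
        (if lf y = mm then 1 else 0) / real (card Fmin)) at_top"
    using tendsto_divide[OF lim[OF True] den] card_Fmin cs by simp
  moreover have "(if lf y = mm then 1 else 0) / real (card Fmin) = Q0 y"
    using True by (simp add: Q0_def Fmin_def)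
  ultimately show ?thesis using True by (simp add: Gb_shift)
next
  case False
  then show ?thesis by (simp add: Gb_def Q0_def Fmin_def)
qed

lemma Gb_cont: "isCont (\<lambda>b. Gb b y) b0"
proof (cases "y \<in> F")
  case True
  have "isCont Zb b0" unfolding Zb_def by (intro continuous_intros)
  then show ?thesis using True Zb_pos[of b0] unfolding Gb_def by (auto intro!: continuous_intros)
qed (simp add: Gb_def)

lemma Gb0: "Gb 0 y = (if y \<in> F then 1 / real (card F) else 0)"
  by (simp add: Gb_def Zb_def)

lemma M_right0: "((\<lambda>T. M T y) \<longlongrightarrow> Q0 y) (at_right 0)"
proof -
  have "((\<lambda>T. Gb (inverse T) y) \<longlongrightarrow> Q0 y) (at_right 0)"
    using filterlim_compose[OF Gb_top filterlim_inverse_at_top_right] .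
  moreover have "eventually (\<lambda>T. Gb (inverse T) y = M T y) (at_right (0::real))"
    using eventually_at_right_less[of "0::real"] proof eventually_elim
      case (elim T) then show ?case using M_eq[of T] by (simp add: inverse_eq_divide)
    qed
  ultimately show ?thesis by (rule tendsto_cong[THEN iffD1, rotated])
qed

lemma M_top: "((\<lambda>T. M T y) \<longlongrightarrow> Gb 0 y) at_top"
proof -
  have "((\<lambda>T. inverse T) \<longlongrightarrow> (0::real)) at_top"
    by (rule tendsto_inverse_0_at_top[OF filterlim_ident])
  then have "((\<lambda>T. Gb (inverse T) y) \<longlongrightarrow> Gb 0 y) at_top"
    by (rule isCont_tendsto_compose[OF Gb_cont])
  moreover have "eventually (\<lambda>T. Gb (inverse T) y = M T y) (at_top::real filter)"
    using eventually_gt_at_top[of "0::real"] proof eventually_elim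
      case (elim T) then show ?case using M_eq[of T] by (simp add: inverse_eq_divide)
    qed
  ultimately show ?thesis by (rule tendsto_cong[THEN iffD1, rotated])
qed

end


context T4 begin

lemma Mext0: "Mext M 0 = Q0"
proof
  fix y show "Mext M 0 y = Q0 y"
    unfolding Mext_def using tendsto_Lim[OF _ M_right0] by (simp add: trivial_limit_at_right_real)
qed

lemma MextInf: "Mext M \<infinity> = Gb 0"
proof
  fix y show "Mext M \<infinity> y = Gb 0 y"
    unfolding Mext_def using tendsto_Lim[OF _ M_top] by simp
qed

lemma MextT: "t > 0 \<Longrightarrow> Mext M (ereal t) = Gb (1/t)"
  unfolding Mext_def using M_eq by (auto intro!: ext)

lemma avglen_F:
  assumes "\<And>x. x \<notin> F \<Longrightarrow> P x = 0"
  shows "avglen E l N P = ereal (\<Sum>x\<in>F. lf x * P x)"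
proof -
  have "avglen E l N P = (\<Sum>x\<in>F. plen E l N x * ereal (P x))"
    unfolding avglen_def
    by (rule sum.mono_neutral_right[OF fin_paths F_sub]) (use assms in auto)
  also have "\<dots> = (\<Sum>x\<in>F. ereal (lf x * P x))"
    by (rule sum.cong) (auto simp: plen_def fpaths_def)
  finally show ?thesis by simp
qed

definition "fb b = (\<Sum>y\<in>F. lf y * Gb b y)"

lemma avglen_Gb: "avglen E l N (Gb b) = ereal (fb b)"
  unfolding fb_def by (rule avglen_F) (simp add: Gb_def)

lemma avglen_Q0: "avglen E l N Q0 = ereal mm"
proof -
  have "avglen E l N Q0 = ereal (\<Sum>x\<in>F. lf x * Q0 x)"
    by (rule avglen_F) (use Fmin_sub in \<open>auto simp: Q0_def\<close>)
  also have "(\<Sum>x\<in>F. lf x * Q0 x) = (\<Sum>x\<in>Fmin. lf x * Q0 x)"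
    by (rule sum.mono_neutral_right[OF finF Fmin_sub]) (auto simp: Q0_def)
  also have "\<dots> = (\<Sum>x\<in>Fmin. mm / real (card Fmin))"
    by (rule sum.cong) (auto simp: Q0_def Fmin_def)
  also have "\<dots> = mm" using card_Fmin by simp
  finally show ?thesis .
qed

lemma Q0_sum: "(\<Sum>x\<in>F. Q0 x) = 1"
proof -
  have "(\<Sum>x\<in>F. Q0 x) = (\<Sum>x\<in>Fmin. Q0 x)"
    by (rule sum.mono_neutral_right[OF finF Fmin_sub]) (auto simp: Q0_def)
  also have "\<dots> = (\<Sum>x\<in>Fmin. 1 / real (card Fmin))"
    by (rule sum.cong) (auto simp: Q0_def)
  also have "\<dots> = 1" using card_Fmin by simp
  finally show ?thesis .
qed

lemma Q0_bridge: "Q0 \<in> bridge N x0 xN"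
  by (rule in_bridge[OF _ _ Q0_sum]) (use Fmin_sub in \<open>auto simp: Q0_def\<close>)

lemma fb_cont: "continuous_on A fb"
proof -
  have "isCont fb b" for b
    unfolding fb_def by (intro continuous_intros Gb_cont)
  then show ?thesis by (simp add: continuous_at_imp_continuous_on)
qed

lemma fb_top: "(fb \<longlongrightarrow> mm) at_top"
proof -
  have "(fb \<longlongrightarrow> (\<Sum>y\<in>F. lf y * Q0 y)) at_top"
    unfolding fb_def by (intro tendsto_intros Gb_top)
  moreover have "(\<Sum>y\<in>F. lf y * Q0 y) = mm"
  proof -
    have h: "\<And>x. x \<notin> F \<Longrightarrow> Q0 x = 0" using Fmin_sub by (auto simp: Q0_def)
    show ?thesis using avglen_Q0 avglen_F[OF h] by simp
  qed
  ultimately show ?thesis by simp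
qed

lemma fb0: "fb 0 = (\<Sum>y\<in>F. lf y) / real (card F)"
  unfolding fb_def Gb0 by (simp add: sum_divide_distrib)

lemma fb_gt:
  assumes nc: "\<exists>y\<in>F. \<exists>z\<in>F. lf y \<noteq> lf z"
  shows "fb b > mm"
proof -
  obtain y where y: "y \<in> F" "lf y \<noteq> mm" using nc by metis
  have "fb b - mm = (\<Sum>x\<in>F. (lf x - mm) * Gb b x)"
    unfolding fb_def using Gb_sum[of b]
    by (simp add: algebra_simps sum_subtractf sum_distrib_left[symmetric])
  also have "\<dots> > 0"
  proof (rule sum_pos2[OF finF y(1)])
    show "0 < (lf y - mm) * Gb b y" using y mm_le[OF y(1)] Gb_pos[OF y(1)] by simp
    show "\<And>x. x \<in> F \<Longrightarrow> 0 \<le> (lf x - mm) * Gb b x" using mm_le Gb_nonneg by simp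
  qed
  finally show ?thesis by simp
qed

lemma term_pos:
  fixes b1 b2 u v :: real
  assumes "b1 < b2" "u \<noteq> v"
  shows "0 < (u - v) * (exp (- b1 * u) * exp (- b2 * v) - exp (- b2 * u) * exp (- b1 * v))"
proof -
  have e1: "exp (- b1 * u) * exp (- b2 * v) = exp (- b1 * u - b2 * v)" by (simp add: exp_add[symmetric])
  have e2: "exp (- b2 * u) * exp (- b1 * v) = exp (- b2 * u - b1 * v)" by (simp add: exp_add[symmetric])
  have d: "(- b1 * u - b2 * v) - (- b2 * u - b1 * v) = (b2 - b1) * (u - v)" by (simp add: algebra_simps)
  show ?thesis
  proof (cases "u > v")
    case True
    then have "(b2 - b1) * (u - v) > 0" using assms by simp
    then have "exp (- b1 * u - b2 * v) > exp (- b2 * u - b1 * v)" using d by simp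
    then show ?thesis unfolding e1 e2 using True by simp
  next
    case False
    then have "u < v" using assms by simp
    then have "(b2 - b1) * (u - v) < 0" using assms by (simp add: mult_pos_neg)
    then have "exp (- b1 * u - b2 * v) < exp (- b2 * u - b1 * v)" using d by simp
    then show ?thesis unfolding e1 e2 using \<open>u < v\<close> by (simp add: mult_neg_neg)
  qed
qed

lemma fb_strict:
  assumes nc: "\<exists>y\<in>F. \<exists>z\<in>F. lf y \<noteq> lf z" and b: "b1 < b2"
  shows "fb b2 < fb b1"
proof -
  define A where "A y = exp (- b1 * lf y)" for y
  define B where "B y = exp (- b2 * lf y)" for y
  have SA: "Zb b1 = (\<Sum>y\<in>F. A y)" and SB: "Zb b2 = (\<Sum>y\<in>F. B y)" by (simp_all add: Zb_def A_def B_def)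
  have f1: "fb b1 = (\<Sum>y\<in>F. lf y * A y) / Zb b1"
    unfolding fb_def Gb_def A_def by (simp add: sum_divide_distrib)
  have f2: "fb b2 = (\<Sum>y\<in>F. lf y * B y) / Zb b2"
    unfolding fb_def Gb_def B_def by (simp add: sum_divide_distrib)
  define S where "S = (\<Sum>y\<in>F. \<Sum>z\<in>F. lf y * (A y * B z - B y * A z))"
  have S1: "S = (\<Sum>y\<in>F. lf y * A y) * Zb b2 - (\<Sum>y\<in>F. lf y * B y) * Zb b1"
    unfolding S_def SA SB
    by (simp add: algebra_simps sum_subtractf sum_distrib_left sum_distrib_right)
  have S2: "S = - (\<Sum>y\<in>F. \<Sum>z\<in>F. lf z * (A y * B z - B y * A z))"
    unfolding S_def
    by (subst sum.swap) (simp add: algebra_simps sum_subtractf sum_negf[symmetric])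
  have "2 * S = (\<Sum>y\<in>F. \<Sum>z\<in>F. (lf y - lf z) * (A y * B z - B y * A z))"
  proof -
    have "2 * S = S + S" by simp
    also have "\<dots> = (\<Sum>y\<in>F. \<Sum>z\<in>F. lf y * (A y * B z - B y * A z)) - (\<Sum>y\<in>F. \<Sum>z\<in>F. lf z * (A y * B z - B y * A z))"
      using S2 S_def by linarith
    also have "\<dots> = (\<Sum>y\<in>F. \<Sum>z\<in>F. (lf y - lf z) * (A y * B z - B y * A z))"
      by (simp add: sum.distrib[symmetric] algebra_simps sum_subtractf)
    finally show ?thesis .
  qed
  moreover have "(\<Sum>y\<in>F. \<Sum>z\<in>F. (lf y - lf z) * (A y * B z - B y * A z)) > 0"
  proof -
    obtain y0 z0 where yz: "y0 \<in> F" "z0 \<in> F" "lf y0 \<noteq> lf z0" using nc by blast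
    have tp: "0 \<le> (lf y - lf z) * (A y * B z - B y * A z)" for y z
      using term_pos[OF b, of "lf y" "lf z"] unfolding A_def B_def
      by (cases "lf y = lf z") (auto simp: less_imp_le)
    show ?thesis
    proof (rule sum_pos2[OF finF yz(1)])
      show "0 < (\<Sum>z\<in>F. (lf y0 - lf z) * (A y0 * B z - B y0 * A z))"
        by (rule sum_pos2[OF finF yz(2)]) (use term_pos[OF b yz(3)] tp in \<open>auto simp: A_def B_def\<close>)
      show "\<And>i. i \<in> F \<Longrightarrow> 0 \<le> (\<Sum>z\<in>F. (lf i - lf z) * (A i * B z - B i * A z))"
        using tp by (simp add: sum_nonneg)
    qed
  qed
  ultimately have Sp: "S > 0" by simp
  have "fb b1 - fb b2 = S / (Zb b1 * Zb b2)"
    unfolding f1 f2 S1 using Zb_pos[of b1] Zb_pos[of b2] by (simp add: field_simps)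
  moreover have "S / (Zb b1 * Zb b2) > 0" using Sp Zb_pos[of b1] Zb_pos[of b2] by simp
  ultimately show ?thesis by simp
qed

end


context T4 begin

lemma ent_max:
  fixes P Q :: "'a list \<Rightarrow> real" and g :: "'a list \<Rightarrow> real"
  assumes S: "S \<subseteq> paths N" and c: "c > 0"
    and Qx: "\<And>x. x \<in> S \<Longrightarrow> Q x = c * exp (- \<beta> * g x)"
    and Q0: "\<And>x. x \<in> paths N \<Longrightarrow> x \<notin> S \<Longrightarrow> Q x = 0"
    and P0: "\<And>x. x \<in> paths N \<Longrightarrow> x \<notin> S \<Longrightarrow> P x = 0"
    and Pn: "\<And>x. 0 \<le> P x" and PS: "(\<Sum>x\<in>S. P x) = 1" and QS: "(\<Sum>x\<in>S. Q x) = 1"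
    and L: "\<beta> = 0 \<or> (\<Sum>x\<in>S. g x * P x) = (\<Sum>x\<in>S. g x * Q x)"
  shows "entropy N P \<le> entropy N Q"
proof -
  have finS: "finite S" using finite_subset[OF S fin_paths] .
  have Qp: "Q x > 0" if "x \<in> S" for x using Qx[OF that] c by simp
  have eS: "entropy N R = - (\<Sum>x\<in>S. if R x = 0 then 0 else R x * ln (R x))"
    if "\<And>x. x \<in> paths N \<Longrightarrow> x \<notin> S \<Longrightarrow> R x = 0" for R
    unfolding entropy_def
    by (subst sum.mono_neutral_right[OF fin_paths S]) (use that in auto)
  have lnQ: "ln (Q x) = ln c - \<beta> * g x" if "x \<in> S" for x
    using Qx[OF that] c by (simp add: ln_mult_pos)
  have hP: "(if P x = 0 then 0 else P x * ln (P x)) =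
      (if P x = 0 then 0 else P x * ln (P x / Q x)) + P x * (ln c - \<beta> * g x)" if x: "x \<in> S" for x
  proof (cases "P x = 0")
    case False
    then have "P x > 0" using Pn[of x] by simp
    then have "ln (P x / Q x) = ln (P x) - ln (Q x)" using Qp[OF x] by (simp add: ln_div)
    then have e: "ln (P x / Q x) = ln (P x) - ln c + \<beta> * g x" using lnQ[OF x] by simp
    show ?thesis using False unfolding e by (simp add: algebra_simps)
  qed simp
  have hQ: "(if Q x = 0 then 0 else Q x * ln (Q x)) = Q x * (ln c - \<beta> * g x)" if x: "x \<in> S" for x
    using Qp[OF x] lnQ[OF x] by simp
  have sP: "(\<Sum>x\<in>S. if P x = 0 then 0 else P x * ln (P x)) =
      (\<Sum>x\<in>S. if P x = 0 then 0 else P x * ln (P x / Q x)) + (ln c - \<beta> * (\<Sum>x\<in>S. g x * P x))"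
    using PS by (simp add: hP sum.distrib algebra_simps sum_subtractf sum_distrib_left[symmetric] sum_distrib_right[symmetric])
  have sQ: "(\<Sum>x\<in>S. if Q x = 0 then 0 else Q x * ln (Q x)) = ln c - \<beta> * (\<Sum>x\<in>S. g x * Q x)"
    using QS by (simp add: hQ algebra_simps sum_subtractf sum_distrib_left[symmetric] sum_distrib_right[symmetric])
  have G: "(\<Sum>x\<in>S. if P x = 0 then 0 else P x * ln (P x / Q x)) \<ge> 0"
    by (rule gibbs(1)[OF finS]) (use Pn Qp PS QS in auto)
  have "\<beta> * (\<Sum>x\<in>S. g x * P x) = \<beta> * (\<Sum>x\<in>S. g x * Q x)" using L by auto
  moreover have "entropy N P = - (\<Sum>x\<in>S. if P x = 0 then 0 else P x * ln (P x))"
    by (rule eS) (rule P0)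
  moreover have "entropy N Q = - (\<Sum>x\<in>S. if Q x = 0 then 0 else Q x * ln (Q x))"
    by (rule eS) (rule Q0)
  ultimately show ?thesis unfolding sP sQ using G L by (cases "\<beta> = 0") auto
qed

lemma avg_support:
  assumes P: "P \<in> bridge N x0 xN" and av: "avglen E l N P = ereal Lb" and nz: "P x \<noteq> 0"
  shows "x \<in> F"
proof -
  have x: "x \<in> paths N" "x ! 0 = x0" "x ! N = xN" using bridge_support[OF P nz] by auto
  have Pn: "P x \<ge> 0" using P by (simp add: bridge_def is_prob_def)
  show ?thesis
  proof (rule ccontr)
    assume "x \<notin> F"
    then have nf: "\<not> feasible E N x" using x by (simp add: fpaths_def)
    then have "plen E l N x * ereal (P x) = \<infinity>" using Pn nz by (simp add: plen_def)
    then have "avglen E l N P = \<infinity>" unfolding avglen_def using x(1) fin_paths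
      by (subst sum_Pinfty) auto
    then show False using av by simp
  qed
qed

lemma Mext_cases:
  assumes "T \<in> {0..\<infinity>}"
  shows "(T = 0 \<and> Mext M T = Q0) \<or> (T = \<infinity> \<and> Mext M T = Gb 0) \<or>
    (\<exists>t>0. T = ereal t \<and> Mext M T = Gb (1/t))"
proof (cases T)
  case (real t)
  then show ?thesis using assms MextT[of t] Mext0 by (cases "t = 0") (auto simp: zero_ereal_def[symmetric])
next
  case PInf then show ?thesis using MextInf by simp
next
  case MInf then show ?thesis using assms by simp
qed

end


context T4 begin

lemma val_Mext:
  assumes nc: "\<exists>y\<in>F. \<exists>z\<in>F. lf y \<noteq> lf z" and T: "T \<in> {0..\<infinity>}"
    and av: "avglen E l N (Mext M T) = ereal Lb"
  shows "(T = 0 \<longleftrightarrow> Lb = mm) \<and> (T = \<infinity> \<longleftrightarrow> Lb = fb 0) \<and> (\<forall>t. T = ereal t \<longrightarrow> t > 0 \<longrightarrow> fb (1/t) = Lb)"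
proof -
  have mlt: "mm < fb 0" using fb_gt[OF nc] .
  have mid: "mm < fb (1/t) \<and> fb (1/t) < fb 0" if "t > 0" for t
    using fb_gt[OF nc] fb_strict[OF nc, of 0 "1/t"] that by simp
  from Mext_cases[OF T] show ?thesis
  proof (elim disjE exE conjE)
    assume "T = 0" "Mext M T = Q0"
    then show ?thesis using av avglen_Q0 mlt by (auto simp: zero_ereal_def)
  next
    assume "T = \<infinity>" "Mext M T = Gb 0"
    then show ?thesis using av avglen_Gb[of 0] mlt by auto
  next
    fix t assume t: "t > 0" "T = ereal t" "Mext M T = Gb (1/t)"
    then have "Lb = fb (1/t)" using av avglen_Gb[of "1/t"] by simp
    then show ?thesis using t mid[OF t(1)] by (auto simp: zero_ereal_def)
  qed
qed


lemma p3_exists: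
  assumes nc: "\<exists>y\<in>F. \<exists>z\<in>F. lf y \<noteq> lf z" and Lb: "mm \<le> Lb" "Lb \<le> fb 0"
  shows "\<exists>T. T \<in> {0..\<infinity>} \<and> avglen E l N (Mext M T) = ereal Lb"
proof (cases "Lb = mm")
  case True
  then show ?thesis using Mext0 avglen_Q0 by (intro exI[of _ 0]) auto
next
  case nm: False
  show ?thesis
  proof (cases "Lb = fb 0")
    case True
    then show ?thesis using MextInf avglen_Gb[of 0] by (intro exI[of _ \<infinity>]) auto
  next
    case False
    then have lt: "mm < Lb" "Lb < fb 0" using nm Lb by auto
    have "eventually (\<lambda>b. fb b < Lb) at_top"
      using order_tendstoD(2)[OF fb_top lt(1)] .
    then have "eventually (\<lambda>b. fb b < Lb \<and> 0 < b) at_top"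
      using eventually_gt_at_top[of "0::real"] by (rule eventually_conj)
    then obtain b1 where b1: "fb b1 < Lb" "0 < b1"
      using eventually_happens[of _ at_top] by fastforce
    have "\<exists>x. 0 \<le> x \<and> x \<le> b1 \<and> fb x = Lb"
      by (rule IVT2') (use b1 lt fb_cont in auto)
    then obtain \<beta> where be: "0 \<le> \<beta>" "\<beta> \<le> b1" "fb \<beta> = Lb" by blast
    then have bp: "\<beta> > 0" using lt by (cases "\<beta> = 0") auto
    have "Mext M (ereal (1/\<beta>)) = Gb \<beta>" using MextT[of "1/\<beta>"] bp by simp
    then show ?thesis using be bp avglen_Gb[of \<beta>] by (intro exI[of _ "ereal (1/\<beta>)"]) auto
  qed
qed

lemma ent_Gb:
  assumes PB: "P \<in> bridge N x0 xN" and supP: "\<And>x. P x \<noteq> 0 \<Longrightarrow> x \<in> F"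
    and PL: "(\<Sum>x\<in>F. lf x * P x) = fb b"
  shows "entropy N P \<le> entropy N (Gb b)"
proof -
  have PF: "(\<Sum>x\<in>F. P x) = 1" and Pn: "\<And>x. 0 \<le> P x" using bridge_sumF[OF PB supP] by auto
  show ?thesis
  proof (rule ent_max[where S = F and c = "1 / Zb b" and \<beta> = b and g = lf])
    show "F \<subseteq> paths N" by (rule F_sub)
    show "0 < 1 / Zb b" using Zb_pos[of b] by simp
    show "\<And>x. x \<in> F \<Longrightarrow> Gb b x = 1 / Zb b * exp (- b * lf x)" by (simp add: Gb_def)
    show "\<And>x. x \<in> paths N \<Longrightarrow> x \<notin> F \<Longrightarrow> Gb b x = 0" by (simp add: Gb_def)
    show "\<And>x. x \<in> paths N \<Longrightarrow> x \<notin> F \<Longrightarrow> P x = 0" using supP by blast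
    show "\<And>x. 0 \<le> P x" by (rule Pn)
    show "(\<Sum>x\<in>F. P x) = 1" by (rule PF)
    show "(\<Sum>x\<in>F. Gb b x) = 1" by (rule Gb_sum)
    show "b = 0 \<or> (\<Sum>x\<in>F. lf x * P x) = (\<Sum>x\<in>F. lf x * Gb b x)" using PL by (simp add: fb_def)
  qed
qed


lemma ent_Q0:
  assumes PB: "P \<in> bridge N x0 xN" and supP: "\<And>x. P x \<noteq> 0 \<Longrightarrow> x \<in> F"
    and PL: "(\<Sum>x\<in>F. lf x * P x) = mm"
  shows "entropy N P \<le> entropy N Q0"
proof -
  have PF: "(\<Sum>x\<in>F. P x) = 1" and Pn: "\<And>x. 0 \<le> P x" using bridge_sumF[OF PB supP] by auto
  have Pm: "P x = 0" if "x \<in> F" "x \<notin> Fmin" for x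
  proof -
    have "(\<Sum>x\<in>F. (lf x - mm) * P x) = mm - mm"
      using PL PF by (simp add: algebra_simps sum_subtractf sum_distrib_left[symmetric] sum_distrib_right[symmetric])
    then have "(\<Sum>x\<in>F. (lf x - mm) * P x) = 0" by simp
    moreover have "\<forall>x\<in>F. 0 \<le> (lf x - mm) * P x" using mm_le Pn by simp
    ultimately have "\<forall>x\<in>F. (lf x - mm) * P x = 0"
      using iffD1[OF sum_nonneg_eq_0_iff[OF finF, of "\<lambda>x. (lf x - mm) * P x"]] by blast
    then have "(lf x - mm) * P x = 0" using that(1) by blast
    moreover have "lf x \<noteq> mm" using that by (simp add: Fmin_def)
    ultimately show ?thesis by simp
  qed
  have PFm: "(\<Sum>x\<in>Fmin. P x) = 1"
  proof -
    have "(\<Sum>x\<in>F. P x) = (\<Sum>x\<in>Fmin. P x)"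
      by (rule sum.mono_neutral_right[OF finF Fmin_sub]) (use Pm in auto)
    then show ?thesis using PF by simp
  qed
  have QFm: "(\<Sum>x\<in>Fmin. Q0 x) = 1"
  proof -
    have "(\<Sum>x\<in>F. Q0 x) = (\<Sum>x\<in>Fmin. Q0 x)"
      by (rule sum.mono_neutral_right[OF finF Fmin_sub]) (auto simp: Q0_def)
    then show ?thesis using Q0_sum by simp
  qed
  show ?thesis
  proof (rule ent_max[where S = Fmin and c = "1 / real (card Fmin)" and \<beta> = 0 and g = lf])
    show "Fmin \<subseteq> paths N" using Fmin_sub F_sub by blast
    show "0 < 1 / real (card Fmin)" using card_Fmin by simp
    show "\<And>x. x \<in> Fmin \<Longrightarrow> Q0 x = 1 / real (card Fmin) * exp (- 0 * lf x)" by (simp add: Q0_def)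
    show "\<And>x. x \<in> paths N \<Longrightarrow> x \<notin> Fmin \<Longrightarrow> Q0 x = 0" by (simp add: Q0_def)
    show "\<And>x. x \<in> paths N \<Longrightarrow> x \<notin> Fmin \<Longrightarrow> P x = 0" using supP Pm by blast
    show "\<And>x. 0 \<le> P x" by (rule Pn)
    show "(\<Sum>x\<in>Fmin. P x) = 1" by (rule PFm)
    show "(\<Sum>x\<in>Fmin. Q0 x) = 1" by (rule QFm)
    show "0 = 0 \<or> (\<Sum>x\<in>Fmin. lf x * P x) = (\<Sum>x\<in>Fmin. lf x * Q0 x)" by simp
  qed
qed

lemma p3_unique:
  assumes nc: "\<exists>y\<in>F. \<exists>z\<in>F. lf y \<noteq> lf z"
    and A: "T1 \<in> {0..\<infinity>}" "avglen E l N (Mext M T1) = ereal Lb"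
    and B: "T2 \<in> {0..\<infinity>}" "avglen E l N (Mext M T2) = ereal Lb"
  shows "T1 = T2"
proof -
  have v1: "(T1 = 0 \<longleftrightarrow> Lb = mm) \<and> (T1 = \<infinity> \<longleftrightarrow> Lb = fb 0) \<and> (\<forall>t. T1 = ereal t \<longrightarrow> t > 0 \<longrightarrow> fb (1/t) = Lb)"
    by (rule val_Mext[OF nc A])
  have v2: "(T2 = 0 \<longleftrightarrow> Lb = mm) \<and> (T2 = \<infinity> \<longleftrightarrow> Lb = fb 0) \<and> (\<forall>t. T2 = ereal t \<longrightarrow> t > 0 \<longrightarrow> fb (1/t) = Lb)"
    by (rule val_Mext[OF nc B])
  have pos: "\<exists>t>0. T = ereal t" if "T \<in> {0..\<infinity>}" "T \<noteq> 0" "T \<noteq> \<infinity>" for T :: ereal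
    using that by (cases T) (auto simp: zero_ereal_def)
  show "T1 = T2"
  proof (cases "T1 = 0 \<or> T1 = \<infinity> \<or> T2 = 0 \<or> T2 = \<infinity>")
    case True
    then show ?thesis
    proof (elim disjE)
      assume "T1 = 0" then have "Lb = mm" using v1 by blast
      then have "T2 = 0" using v2 by simp
      then show ?thesis using \<open>T1 = 0\<close> by simp
    next
      assume "T1 = \<infinity>" then have "Lb = fb 0" using v1 by blast
      then have "T2 = \<infinity>" using v2 by simp
      then show ?thesis using \<open>T1 = \<infinity>\<close> by simp
    next
      assume "T2 = 0" then have "Lb = mm" using v2 by blast
      then have "T1 = 0" using v1 by simp
      then show ?thesis using \<open>T2 = 0\<close> by simp
    next
      assume "T2 = \<infinity>" then have "Lb = fb 0" using v2 by blast
      then have "T1 = \<infinity>" using v1 by simp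
      then show ?thesis using \<open>T2 = \<infinity>\<close> by simp
    qed
  next
    case False
    then obtain t1 where t1: "t1 > 0" "T1 = ereal t1" using pos[OF A(1)] by blast
    obtain t2 where t2: "t2 > 0" "T2 = ereal t2" using pos[OF B(1)] False by blast
    have "fb (1/t1) = Lb" using v1 t1 by blast
    moreover have "fb (1/t2) = Lb" using v2 t2 by blast
    ultimately have e: "fb (1/t1) = fb (1/t2)" by simp
    have "1/t1 = 1/t2"
    proof (rule ccontr)
      assume "1/t1 \<noteq> 1/t2"
      then have "1/t1 < 1/t2 \<or> 1/t2 < 1/t1" by linarith
      then show False
      proof
        assume "1/t1 < 1/t2" then show False using fb_strict[OF nc, of "1/t1" "1/t2"] e by simp
      next
        assume "1/t2 < 1/t1" then show False using fb_strict[OF nc, of "1/t2" "1/t1"] e by simp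
      qed
    qed
    then show ?thesis using t1 t2 by simp
  qed
qed


lemma part3:
  assumes nc: "\<exists>y\<in>F. \<exists>z\<in>F. lf y \<noteq> lf z" and Lb: "mm \<le> Lb" "Lb \<le> fb 0"
  shows "(\<exists>!T::ereal. T \<in> {0..\<infinity>} \<and> avglen E l N (Mext M T) = ereal Lb)
        \<and> (\<forall>T::ereal. T \<in> {0..\<infinity>} \<and> avglen E l N (Mext M T) = ereal Lb \<longrightarrow>
             Mext M T \<in> bridge N x0 xN \<and>
             (\<forall>P\<in>bridge N x0 xN. avglen E l N P = ereal Lb \<longrightarrow>
                 entropy N P \<le> entropy N (Mext M T)))"
proof (intro conjI allI impI ballI)
  show "\<exists>!T::ereal. T \<in> {0..\<infinity>} \<and> avglen E l N (Mext M T) = ereal Lb"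
    by (rule ex_ex1I[OF p3_exists[OF nc Lb]]) (use p3_unique[OF nc] in blast)
next
  fix T :: ereal assume A: "T \<in> {0..\<infinity>} \<and> avglen E l N (Mext M T) = ereal Lb"
  then show "Mext M T \<in> bridge N x0 xN"
    using Mext_cases[of T] Q0_bridge Gb_bridge by auto
next
  fix T :: ereal and P
  assume A: "T \<in> {0..\<infinity>} \<and> avglen E l N (Mext M T) = ereal Lb"
    and PB: "P \<in> bridge N x0 xN" and avP: "avglen E l N P = ereal Lb"
  have T: "T \<in> {0..\<infinity>}" and avT: "avglen E l N (Mext M T) = ereal Lb" using A by auto
  have v: "(T = 0 \<longleftrightarrow> Lb = mm) \<and> (T = \<infinity> \<longleftrightarrow> Lb = fb 0) \<and> (\<forall>t. T = ereal t \<longrightarrow> t > 0 \<longrightarrow> fb (1/t) = Lb)"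
    by (rule val_Mext[OF nc T avT])
  have supP: "\<And>x. P x \<noteq> 0 \<Longrightarrow> x \<in> F" using avg_support[OF PB avP] .
  have z: "\<And>x. x \<notin> F \<Longrightarrow> P x = 0" using supP by blast
  have PL: "(\<Sum>x\<in>F. lf x * P x) = Lb" using avglen_F[OF z] avP by simp
  show "entropy N P \<le> entropy N (Mext M T)"
    using Mext_cases[OF T]
  proof (elim disjE exE conjE)
    assume "T = 0" "Mext M T = Q0"
    then show ?thesis using ent_Q0[OF PB supP] PL v by simp
  next
    assume "T = \<infinity>" "Mext M T = Gb 0"
    then show ?thesis using ent_Gb[OF PB supP, of 0] PL v by simp
  next
    fix t assume "t > 0" "T = ereal t" "Mext M T = Gb (1/t)"
    then show ?thesis using ent_Gb[OF PB supP, of "1/t"] PL v by simp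
  qed
qed

end

theorem theorem4:
  fixes E :: "('a::finite \<times> 'a) set" and l :: "'a \<Rightarrow> 'a \<Rightarrow> real"
    and N :: nat and x0 xN :: 'a and M :: "real \<Rightarrow> 'a list \<Rightarrow> real"
  assumes lnonneg: "\<And>i j. (i, j) \<in> E \<Longrightarrow> 0 \<le> l i j"
    and N1: "1 \<le> N"
    and nonempty: "fpaths E N x0 xN \<noteq> {}"
    and Mmin: "\<And>T. T > 0 \<Longrightarrow> M T \<in> bridge N x0 xN \<and>
        (\<forall>P\<in>bridge N x0 xN. relent N (M T) (boltz E l N T) \<le> relent N P (boltz E l N T))"
  shows
    "(\<forall>y\<in>fpaths E N x0 xN.
        rlen l N y > Min (rlen l N ` fpaths E N x0 xN) \<longrightarrow>
        ((\<lambda>T. M T y) \<longlongrightarrow> 0) (at_right 0))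
   \<and> (\<forall>y. ((\<lambda>T. M T y) \<longlongrightarrow>
        (if y \<in> fpaths E N x0 xN then 1 / real (card (fpaths E N x0 xN)) else 0)) at_top)
   \<and> (card (fpaths E N x0 xN) \<noteq> 1 \<and>
      (\<exists>y\<in>fpaths E N x0 xN. \<exists>z\<in>fpaths E N x0 xN. rlen l N y \<noteq> rlen l N z) \<longrightarrow>
      (\<forall>Lb::real. Min (rlen l N ` fpaths E N x0 xN) \<le> Lb \<and>
          Lb \<le> (\<Sum>y\<in>fpaths E N x0 xN. rlen l N y) / real (card (fpaths E N x0 xN)) \<longrightarrow>
        (\<exists>!T::ereal. T \<in> {0..\<infinity>} \<and> avglen E l N (Mext M T) = ereal Lb)
        \<and> (\<forall>T::ereal. T \<in> {0..\<infinity>} \<and> avglen E l N (Mext M T) = ereal Lb \<longrightarrow>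
             Mext M T \<in> bridge N x0 xN \<and>
             (\<forall>P\<in>bridge N x0 xN. avglen E l N P = ereal Lb \<longrightarrow>
                 entropy N P \<le> entropy N (Mext M T)))))"
proof -
  interpret T4 E l N x0 xN M
    by (rule T4.intro) (use lnonneg N1 nonempty Mmin in auto)
  have mmd: "Min (rlen l N ` fpaths E N x0 xN) = mm" by (simp add: mm_def)
  have i: "\<forall>y\<in>fpaths E N x0 xN.
        rlen l N y > Min (rlen l N ` fpaths E N x0 xN) \<longrightarrow>
        ((\<lambda>T. M T y) \<longlongrightarrow> 0) (at_right 0)"
  proof (intro ballI impI)
    fix y assume "y \<in> fpaths E N x0 xN" "rlen l N y > Min (rlen l N ` fpaths E N x0 xN)"
    then have "Q0 y = 0" unfolding mmd by (simp add: Q0_def Fmin_def)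
    then show "((\<lambda>T. M T y) \<longlongrightarrow> 0) (at_right 0)" using M_right0[of y] by simp
  qed
  have ii: "\<forall>y. ((\<lambda>T. M T y) \<longlongrightarrow>
        (if y \<in> fpaths E N x0 xN then 1 / real (card (fpaths E N x0 xN)) else 0)) at_top"
    using M_top Gb0 by simp
  have iii: "card (fpaths E N x0 xN) \<noteq> 1 \<and>
      (\<exists>y\<in>fpaths E N x0 xN. \<exists>z\<in>fpaths E N x0 xN. rlen l N y \<noteq> rlen l N z) \<longrightarrow>
      (\<forall>Lb::real. Min (rlen l N ` fpaths E N x0 xN) \<le> Lb \<and>
          Lb \<le> (\<Sum>y\<in>fpaths E N x0 xN. rlen l N y) / real (card (fpaths E N x0 xN)) \<longrightarrow>
        (\<exists>!T::ereal. T \<in> {0..\<infinity>} \<and> avglen E l N (Mext M T) = ereal Lb)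
        \<and> (\<forall>T::ereal. T \<in> {0..\<infinity>} \<and> avglen E l N (Mext M T) = ereal Lb \<longrightarrow>
             Mext M T \<in> bridge N x0 xN \<and>
             (\<forall>P\<in>bridge N x0 xN. avglen E l N P = ereal Lb \<longrightarrow>
                 entropy N P \<le> entropy N (Mext M T))))"
  proof (intro impI allI)
    fix Lb :: real
    assume nc: "card (fpaths E N x0 xN) \<noteq> 1 \<and>
      (\<exists>y\<in>fpaths E N x0 xN. \<exists>z\<in>fpaths E N x0 xN. rlen l N y \<noteq> rlen l N z)"
      and Lb: "Min (rlen l N ` fpaths E N x0 xN) \<le> Lb \<and>
          Lb \<le> (\<Sum>y\<in>fpaths E N x0 xN. rlen l N y) / real (card (fpaths E N x0 xN))"
    show "(\<exists>!T::ereal. T \<in> {0..\<infinity>} \<and> avglen E l N (Mext M T) = ereal Lb)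
        \<and> (\<forall>T::ereal. T \<in> {0..\<infinity>} \<and> avglen E l N (Mext M T) = ereal Lb \<longrightarrow>
             Mext M T \<in> bridge N x0 xN \<and>
             (\<forall>P\<in>bridge N x0 xN. avglen E l N P = ereal Lb \<longrightarrow>
                 entropy N P \<le> entropy N (Mext M T)))"
      by (rule part3) (use nc Lb mmd fb0 in auto)
  qed
  show ?thesis using i ii iii by blast
qed

end
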